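(* Let $H=(V,E)$ be a finite simple graph, let $M$ be a maximum $2$-matching of $H$, let $v_0$ be a singleton of $M$, and let $v_0,v_1,\dots,v_{2i+2}$ be an A-alternating path saving $v_0$. Define $$M'=\bigl(M\setminus\{v_{2j+1}v_{2j+2}: 0\le j\le i\}\bigr)\cup\{v_{2j}v_{2j+1}: 0\le j\le i\}.$$ Then $M'$ is a maximum $2$-matching of $H$, and $M'$ has exactly one fewer singleton than $M$.
   Context: A $2$-matching of $H$ is a set $M\subseteq E$ in which every vertex is incident to at most two edges of $M$. It is maximum if $|M|$ is as large as possible. The components of $(V,M)$ are paths and cycles. A single vertex counts as a $0$-path, and a $k$-path has $k$ edges. A singleton of $M$ is a vertex of degree $0$ in $M$. Given a maximum $2$-matching $M$ and a singleton $v_0$ of $M$, an A-alternating path saving $v_0$ is a sequence of pairwise distinct vertices $v_0,v_1,\dots,v_{2i+2}$, with $i\ge 0$, satisfying: (1) $v_{2j}v_{2j+1}\in E\setminus M$ for every $j=0,\dots,i$; (2) for every $j=1,\dots,i$ there is a component $P_j$ of $(V,M)$ that is a $2$-path, with $v_{2j-1}$ its middle vertex and $v_{2j}$ one of its two endpoints, and $P_1,\dots,P_i$ are pairwise distinct; (3) $v_{2i+1}$ lies on a component $Q$ of $(V,M)$ that is either a cycle or a path with at least $3$ edges, $v_{2i+1}v_{2i+2}\in M$, and if $Q$ is a path then $v_{2i+2}$ is not an endpoint of $Q$. *)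

theory Defs
  imports Main
begin

definition simple_graph :: "'a set \<Rightarrow> 'a set set \<Rightarrow> bool" where
  "simple_graph V E \<longleftrightarrow> finite V \<and> (\<forall>e\<in>E. \<exists>u v. e = {u, v} \<and> u \<in> V \<and> v \<in> V \<and> u \<noteq> v)"

definition deg :: "'a set set \<Rightarrow> 'a \<Rightarrow> nat" where
  "deg M v = card {e \<in> M. v \<in> e}"

definition two_matching :: "'a set \<Rightarrow> 'a set set \<Rightarrow> 'a set set \<Rightarrow> bool" where
  "two_matching V E M \<longleftrightarrow> M \<subseteq> E \<and> (\<forall>v\<in>V. deg M v \<le> 2)"

definition max_two_matching :: "'a set \<Rightarrow> 'a set set \<Rightarrow> 'a set set \<Rightarrow> bool" where
  "max_two_matching V E M \<longleftrightarrow> two_matching V E M \<and>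
     (\<forall>M'. two_matching V E M' \<longrightarrow> card M' \<le> card M)"

definition singletons :: "'a set \<Rightarrow> 'a set set \<Rightarrow> 'a set" where
  "singletons V M = {v \<in> V. deg M v = 0}"

definition component_of :: "'a set \<Rightarrow> 'a set set \<Rightarrow> 'a \<Rightarrow> 'a set" where
  "component_of V M v = {u \<in> V. (\<lambda>x y. {x, y} \<in> M)\<^sup>*\<^sup>* v u}"

definition comp_edges :: "'a set set \<Rightarrow> 'a set \<Rightarrow> 'a set set" where
  "comp_edges M C = {e \<in> M. e \<subseteq> C}"

definition path_edges :: "'a list \<Rightarrow> 'a set set" where
  "path_edges xs = {{xs ! k, xs ! (k + 1)} | k. k + 1 < length xs}"

definition path_comp :: "'a set \<Rightarrow> 'a set set \<Rightarrow> 'a list \<Rightarrow> bool" where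
  "path_comp V M xs \<longleftrightarrow> xs \<noteq> [] \<and> distinct xs \<and> hd xs \<in> V \<and>
     set xs = component_of V M (hd xs) \<and> comp_edges M (set xs) = path_edges xs"

definition cycle_comp :: "'a set \<Rightarrow> 'a set set \<Rightarrow> 'a list \<Rightarrow> bool" where
  "cycle_comp V M xs \<longleftrightarrow> length xs \<ge> 3 \<and> distinct xs \<and> hd xs \<in> V \<and>
     set xs = component_of V M (hd xs) \<and>
     comp_edges M (set xs) = path_edges xs \<union> {{last xs, hd xs}}"

definition A_alt_path :: "'a set \<Rightarrow> 'a set set \<Rightarrow> 'a set set \<Rightarrow> nat \<Rightarrow> 'a list \<Rightarrow> bool" where
  "A_alt_path V E M i vs \<longleftrightarrow>
     length vs = 2 * i + 3 \<and> distinct vs \<and> set vs \<subseteq> V \<and>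
     (\<forall>j\<le>i. {vs ! (2*j), vs ! (2*j+1)} \<in> E - M) \<and>
     (\<exists>P :: nat \<Rightarrow> 'a list.
        (\<forall>j\<in>{1..i}. path_comp V M (P j) \<and> length (P j) = 3 \<and>
            P j ! 1 = vs ! (2*j - 1) \<and> vs ! (2*j) \<in> {P j ! 0, P j ! 2}) \<and>
        inj_on (\<lambda>j. set (P j)) {1..i}) \<and>
     {vs ! (2*i+1), vs ! (2*i+2)} \<in> M \<and>
     (\<exists>Q. vs ! (2*i+1) \<in> set Q \<and>
        (cycle_comp V M Q \<or>
         (path_comp V M Q \<and> length Q \<ge> 4 \<and> vs ! (2*i+2) \<notin> {hd Q, last Q})))"

end

theory Submission
  imports Defs
begin

lemma deg_swap:
  assumes "finite M" "R \<subseteq> M" "A \<inter> M = {}" "finite A"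
  shows "deg (M - R \<union> A) v + card {e\<in>R. v\<in>e} = deg M v + card {e\<in>A. v\<in>e}"
proof -
  have eq: "{e \<in> M - R \<union> A. v \<in> e} = ({e\<in>M. v\<in>e} - {e\<in>R. v\<in>e}) \<union> {e\<in>A. v\<in>e}" by blast
  have d: "({e\<in>M. v\<in>e} - {e\<in>R. v\<in>e}) \<inter> {e\<in>A. v\<in>e} = {}" using assms by blast
  have fR: "finite {e\<in>R. v\<in>e}" using assms(1,2) by (rule_tac finite_subset[of _ M]) blast+
  have fM: "finite {e\<in>M. v\<in>e}" using assms(1) by simp
  have fA: "finite {e\<in>A. v\<in>e}" using assms(4) by simp
  have sub: "{e\<in>R. v\<in>e} \<subseteq> {e\<in>M. v\<in>e}" using assms(2) by blast
  have c1: "card ({e\<in>M. v\<in>e} - {e\<in>R. v\<in>e}) = card {e\<in>M. v\<in>e} - card {e\<in>R. v\<in>e}"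
    using fR sub by (rule card_Diff_subset)
  have c2: "card {e\<in>R. v\<in>e} \<le> card {e\<in>M. v\<in>e}" using fM sub by (rule card_mono)
  have "card {e \<in> M - R \<union> A. v \<in> e} = card ({e\<in>M. v\<in>e} - {e\<in>R. v\<in>e}) + card {e\<in>A. v\<in>e}"
    unfolding eq using fM fA d by (intro card_Un_disjoint) auto
  then show ?thesis unfolding deg_def using c1 c2 by linarith
qed
lemma sel_eq:
  assumes "distinct vs" "\<forall>j\<in>J. f j < length vs \<and> g j < length vs" "k < length vs"
  shows "{e \<in> (\<lambda>j. {vs!f j, vs!g j}) ` J. vs!k \<in> e} = (\<lambda>j. {vs!f j, vs!g j}) ` {j\<in>J. f j = k \<or> g j = k}"
  using assms by (auto simp: nth_eq_iff_index_eq)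

lemma idxR: assumes k: "(k::nat) < 2*i+3"
  shows "{j\<in>{..i}. 2*j+1 = k \<or> 2*j+2 = k} = (if 1 \<le> k then {(k-1) div 2} else {})"
proof (cases "1 \<le> k")
  case True
  have "{j\<in>{..i}. 2*j+1 = k \<or> 2*j+2 = k} = {(k-1) div 2}"
  proof (intro set_eqI iffI)
    fix j assume "j \<in> {j\<in>{..i}. 2*j+1 = k \<or> 2*j+2 = k}" thus "j \<in> {(k-1) div 2}" by auto
  next
    fix j assume "j \<in> {(k-1) div 2}" thus "j \<in> {j\<in>{..i}. 2*j+1 = k \<or> 2*j+2 = k}" using True k by auto
  qed
  thus ?thesis using True by simp
qed simp

lemma idxA: assumes "(k::nat) < 2*i+3"
  shows "{j\<in>{..i}. 2*j = k \<or> 2*j+1 = k} = (if k \<le> 2*i+1 then {k div 2} else {})"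
proof (cases "k \<le> 2*i+1")
  case True
  have "{j\<in>{..i}. 2*j = k \<or> 2*j+1 = k} = {k div 2}"
  proof (intro set_eqI iffI)
    fix j assume "j \<in> {j\<in>{..i}. 2*j = k \<or> 2*j+1 = k}" thus "j \<in> {k div 2}" by auto
  next
    fix j assume "j \<in> {k div 2}" thus "j \<in> {j\<in>{..i}. 2*j = k \<or> 2*j+1 = k}" using True by auto
  qed
  thus ?thesis using True by simp
qed (use assms in auto)

lemma dnth: "distinct xs \<Longrightarrow> a < length xs \<Longrightarrow> b < length xs \<Longrightarrow> a \<noteq> b \<Longrightarrow> xs!a \<noteq> xs!b"
  by (simp add: nth_eq_iff_index_eq)

lemma pe_mem: "k + 1 < length xs \<Longrightarrow> {xs!k, xs!(k+1)} \<in> path_edges xs"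
  unfolding path_edges_def by blast

lemma two_edges_deg:
  assumes "finite M" "e1 \<in> M" "e2 \<in> M" "e1 \<noteq> e2" "w \<in> e1" "w \<in> e2"
  shows "2 \<le> deg M w"
proof -
  have "card {e1, e2} \<le> card {e\<in>M. w\<in>e}" using assms by (intro card_mono) auto
  thus ?thesis using assms(4) unfolding deg_def by simp
qed

lemma interior_two:
  assumes "distinct Q" "path_edges Q \<subseteq> M" "0 < k" "k + 1 < length Q"
  shows "\<exists>e1 e2. e1 \<in> M \<and> e2 \<in> M \<and> e1 \<noteq> e2 \<and> Q!k \<in> e1 \<and> Q!k \<in> e2"
proof -
  have a: "{Q!(k-1), Q!k} \<in> M" using pe_mem[of "k-1" Q] assms by auto
  have b: "{Q!k, Q!(k+1)} \<in> M" using pe_mem[of k Q] assms by auto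
  have "Q!(k-1) \<noteq> Q!k" "Q!(k-1) \<noteq> Q!(k+1)" using assms by (auto simp: nth_eq_iff_index_eq)
  hence "{Q!(k-1), Q!k} \<noteq> {Q!k, Q!(k+1)}" by (auto simp: doubleton_eq_iff)
  thus ?thesis using a b by blast
qed

theorem mainTheorem2:
  fixes V :: "'a set" and E M :: "'a set set" and i :: nat and vs :: "'a list"
  assumes "simple_graph V E"
    and "max_two_matching V E M"
    and "vs ! 0 \<in> singletons V M"
    and "A_alt_path V E M i vs"
  shows "max_two_matching V E
           ((M - {{vs ! (2*j+1), vs ! (2*j+2)} | j. j \<le> i}) \<union> {{vs ! (2*j), vs ! (2*j+1)} | j. j \<le> i})
       \<and> card (singletons V
           ((M - {{vs ! (2*j+1), vs ! (2*j+2)} | j. j \<le> i}) \<union> {{vs ! (2*j), vs ! (2*j+1)} | j. j \<le> i}))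
           + 1 = card (singletons V M)"
proof -
  define fR where "fR = (\<lambda>j. {vs!(2*j+1), vs!(2*j+2)})"
  define fA where "fA = (\<lambda>j. {vs!(2*j), vs!(2*j+1)})"
  define R where "R = fR ` {..i}"
  define A where "A = fA ` {..i}"
  have Req: "{{vs ! (2*j+1), vs ! (2*j+2)} | j. j \<le> i} = R" unfolding R_def fR_def by auto
  have Aeq: "{{vs ! (2*j), vs ! (2*j+1)} | j. j \<le> i} = A" unfolding A_def fA_def by auto
  note alt = assms(4)[unfolded A_alt_path_def]
  have len: "length vs = 2*i+3" and dist: "distinct vs" and setV: "set vs \<subseteq> V"
    and EM: "\<forall>j\<le>i. {vs ! (2*j), vs ! (2*j+1)} \<in> E - M"
    and lastM: "{vs ! (2*i+1), vs ! (2*i+2)} \<in> M"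
    using alt by auto
  obtain P :: "nat \<Rightarrow> 'a list" where P: "\<forall>j\<in>{1..i}. path_comp V M (P j) \<and> length (P j) = 3 \<and>
            P j ! 1 = vs ! (2*j - 1) \<and> vs ! (2*j) \<in> {P j ! 0, P j ! 2}"
    using alt by blast
  obtain Q where uQ: "vs ! (2*i+1) \<in> set Q" and Qc: "cycle_comp V M Q \<or>
         (path_comp V M Q \<and> length Q \<ge> 4 \<and> vs ! (2*i+2) \<notin> {hd Q, last Q})"
    using alt by blast
  have sg: "finite V \<and> (\<forall>e\<in>E. \<exists>u v. e = {u, v} \<and> u \<in> V \<and> v \<in> V \<and> u \<noteq> v)"
    using assms(1) unfolding simple_graph_def by assumption
  have EV: "\<forall>e\<in>E. e \<subseteq> V"
  proof
    fix e assume "e \<in> E"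
    then obtain u v where "e = {u, v}" "u \<in> V" "v \<in> V" using sg by metis
    thus "e \<subseteq> V" by simp
  qed
  have finV: "finite V" using sg by (rule conjunct1)
  have finE: "finite E" using EV finV by (meson Pow_iff finite_Pow_iff finite_subset subsetI)
  have ME: "M \<subseteq> E" and degM: "\<forall>v\<in>V. deg M v \<le> 2"
    using assms(2) unfolding max_two_matching_def two_matching_def by auto
  have maxM: "\<forall>M'. two_matching V E M' \<longrightarrow> card M' \<le> card M"
    using assms(2) unfolding max_two_matching_def by auto
  have finM: "finite M" using ME finE finite_subset by blast
  have MV: "\<forall>e\<in>M. e \<subseteq> V" using ME EV by blast
  have deg0: "deg M (vs!0) = 0" using assms(3) unfolding singletons_def by auto
  have RM: "R \<subseteq> M"
  proof
    fix e assume "e \<in> R"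
    then obtain j where j: "j \<le> i" "e = fR j" unfolding R_def by auto
    show "e \<in> M"
    proof (cases "j = i")
      case True thus ?thesis using j lastM unfolding fR_def by simp
    next
      case False
      define j' where "j' = Suc j"
      have j': "j' \<in> {1..i}" using j False unfolding j'_def by auto
      have Pj: "path_comp V M (P j') \<and> length (P j') = 3 \<and>
            P j' ! 1 = vs ! (2*j' - 1) \<and> vs ! (2*j') \<in> {P j' ! 0, P j' ! 2}"
        using P j' by (rule bspec)
      have i1: "2*j' - 1 = 2*j+1" and i2: "2*j' = 2*j+2" unfolding j'_def by simp_all
      have pc: "path_comp V M (P j')" and l3: "length (P j') = 3"
        and m1: "P j' ! 1 = vs ! (2*j+1)" and m2: "vs ! (2*j+2) \<in> {P j' ! 0, P j' ! 2}"
        using Pj unfolding i1 i2 by auto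
      have pem: "path_edges (P j') \<subseteq> M"
        using pc unfolding path_comp_def comp_edges_def by auto
      have "{P j'!0, P j'!1} \<in> M" using pe_mem[of 0 "P j'"] l3 pem by auto
      moreover have "{P j'!1, P j'!2} \<in> M" using pe_mem[of 1 "P j'", unfolded one_add_one] l3 pem by auto
      ultimately show ?thesis using m1 m2 j unfolding fR_def by (auto simp: insert_commute)
    qed
  qed
  have AE: "A \<subseteq> E" and AM: "A \<inter> M = {}" using EM unfolding A_def fA_def by auto
  have finA: "finite A" unfolding A_def by simp
  have injR: "inj_on fR {..i}"
    unfolding inj_on_def fR_def using dist len by (auto simp: doubleton_eq_iff nth_eq_iff_index_eq)
  have injA: "inj_on fA {..i}"
    unfolding inj_on_def fA_def using dist len by (auto simp: doubleton_eq_iff nth_eq_iff_index_eq)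
  have cRA: "card R = card A" unfolding R_def A_def
    using card_image[OF injR] card_image[OF injA] by simp
  define M' where "M' = M - R \<union> A"
  have cardM': "card M' = card M"
  proof -
    have "card M' = card (M - R) + card A" unfolding M'_def
      using finM finA AM by (intro card_Un_disjoint) auto
    also have "card (M - R) = card M - card R" using RM finM by (meson card_Diff_subset finite_subset)
    also have "card R \<le> card M" using RM finM by (rule card_mono[rotated])
    ultimately show ?thesis using cRA by simp
  qed
  have degw: "2 \<le> deg M (vs!(2*i+2))"
  proof -
    let ?u = "vs!(2*i+1)" and ?w = "vs!(2*i+2)"
    have comp: "set Q = component_of V M (hd Q)" and dQ: "distinct Q"
      and peQ: "path_edges Q \<subseteq> M"
      using Qc unfolding cycle_comp_def path_comp_def comp_edges_def by auto
    have "(\<lambda>x y. {x, y} \<in> M)\<^sup>*\<^sup>* (hd Q) ?u" using uQ comp unfolding component_of_def by auto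
    hence "(\<lambda>x y. {x, y} \<in> M)\<^sup>*\<^sup>* (hd Q) ?w" using lastM by (rule rtranclp.rtrancl_into_rtrancl)
    moreover have "?w \<in> V" using setV len by auto
    ultimately have wQ: "?w \<in> set Q" using comp unfolding component_of_def by auto
    then obtain k where k: "k < length Q" "Q!k = ?w" by (meson in_set_conv_nth)
    have "\<exists>e1 e2. e1 \<in> M \<and> e2 \<in> M \<and> e1 \<noteq> e2 \<and> ?w \<in> e1 \<and> ?w \<in> e2"
    proof (cases "0 < k \<and> k + 1 < length Q")
      case True thus ?thesis using interior_two[OF dQ peQ, of k] k by auto
    next
      case False
      have Qne: "Q \<noteq> []" using k by auto
      have hd: "hd Q = Q!0" using Qne by (simp add: hd_conv_nth)
      have lst: "last Q = Q!(length Q - 1)" using Qne by (simp add: last_conv_nth)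
      show ?thesis
      proof (cases "cycle_comp V M Q")
        case cyc: True
        have l3: "length Q \<ge> 3" using cyc unfolding cycle_comp_def by auto
        have ce: "{last Q, hd Q} \<in> M" using cyc unfolding cycle_comp_def comp_edges_def by auto
        show ?thesis
        proof (cases "k = 0")
          case True
          have a: "{Q!0, Q!1} \<in> M" using pe_mem[of 0 Q] l3 peQ by auto
          have "Q!1 \<noteq> Q!(length Q - 1)" by (rule dnth[OF dQ]) (use l3 in auto)
          have "Q!1 \<noteq> Q!0" by (rule dnth[OF dQ]) (use l3 in auto)
          hence "{Q!0, Q!1} \<noteq> {last Q, hd Q}" using `Q!1 \<noteq> Q!(length Q - 1)` using hd lst by (auto simp: doubleton_eq_iff)
          thus ?thesis using a ce k True hd by (metis insertCI)
        next
          case False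
          hence kl: "k = length Q - 1" using `\<not> (0 < k \<and> k + 1 < length Q)` k by auto
          have a: "{Q!(length Q - 2), Q!(length Q - 2 + 1)} \<in> M" using pe_mem[of "length Q - 2" Q] l3 peQ by auto
          have e: "length Q - 2 + 1 = length Q - 1" using l3 by auto
          have "Q!(length Q - 2) \<noteq> Q!(length Q - 1)" by (rule dnth[OF dQ]) (use l3 in auto)
          have "Q!(length Q - 2) \<noteq> Q!0" by (rule dnth[OF dQ]) (use l3 in auto)
          hence "{Q!(length Q - 2), Q!(length Q - 1)} \<noteq> {last Q, hd Q}" using `Q!(length Q - 2) \<noteq> Q!(length Q - 1)` using hd lst by (auto simp: doubleton_eq_iff)
          moreover have "?w \<in> {Q!(length Q - 2), Q!(length Q - 1)}" "?w \<in> {last Q, hd Q}" using k kl lst by auto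
          moreover have "{Q!(length Q - 2), Q!(length Q - 1)} \<in> M" using a e by simp
          ultimately show ?thesis using ce by blast
        qed
      next
        case False
        hence nw: "?w \<notin> {hd Q, last Q}" using Qc by auto
        have "k \<noteq> 0"
        proof
          assume "k = 0" hence "?w = hd Q" using k(2) hd by simp
          thus False using nw by simp
        qed
        moreover have "k \<noteq> length Q - 1"
        proof
          assume "k = length Q - 1" hence "?w = last Q" using k(2) lst by simp
          thus False using nw by simp
        qed
        ultimately show ?thesis using `\<not> (0 < k \<and> k + 1 < length Q)` k by auto
      qed
    qed
    then obtain e1 e2 where "e1 \<in> M" "e2 \<in> M" "e1 \<noteq> e2" "?w \<in> e1" "?w \<in> e2" by blast
    thus ?thesis using two_edges_deg[OF finM] by blast
  qed
  have key: "deg M' v \<le> 2 \<and> (deg M' v = 0 \<longleftrightarrow> deg M v = 0 \<and> v \<noteq> vs!0)" if vV: "v \<in> V" for v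
  proof -
    have sw: "deg M' v + card {e\<in>R. v\<in>e} = deg M v + card {e\<in>A. v\<in>e}"
      unfolding M'_def using deg_swap[OF finM RM AM finA] .
    have dv: "deg M v \<le> 2" using degM vV by auto
    show ?thesis
    proof (cases "v \<in> set vs")
      case True
      then obtain k where k: "k < length vs" "v = vs!k" by (metis in_set_conv_nth)
      have k3: "k < 2*i+3" using k len by simp
      have "{e\<in>R. v\<in>e} = fR ` {j\<in>{..i}. 2*j+1 = k \<or> 2*j+2 = k}"
        unfolding R_def fR_def k(2) using sel_eq[OF dist, of "{..i}" "\<lambda>j. 2*j+1" "\<lambda>j. 2*j+2" k] k len by auto
      hence cr: "card {e\<in>R. v\<in>e} = (if 1 \<le> k then 1 else 0)" using idxR[OF k3] by simp
      have "{e\<in>A. v\<in>e} = fA ` {j\<in>{..i}. 2*j = k \<or> 2*j+1 = k}"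
        unfolding A_def fA_def k(2) using sel_eq[OF dist, of "{..i}" "\<lambda>j. 2*j" "\<lambda>j. 2*j+1" k] k len by auto
      hence ca: "card {e\<in>A. v\<in>e} = (if k \<le> 2*i+1 then 1 else 0)" using idxA[OF k3] by simp
      have v0: "(v = vs!0) = (k = 0)" using k dist len by (auto simp: nth_eq_iff_index_eq)
      show ?thesis
      proof (cases "k = 0")
        case True thus ?thesis using sw cr ca deg0 k v0 by auto
      next
        case False
        show ?thesis
        proof (cases "k = 2*i+2")
          case True thus ?thesis using sw cr ca degw k v0 dv by auto
        next
          case False thus ?thesis using sw cr ca k3 v0 dv `k \<noteq> 0` by auto
        qed
      qed
    next
      case False
      have e1: "{e\<in>R. v\<in>e} = {}" using False len unfolding R_def fR_def by auto
      have e2: "{e\<in>A. v\<in>e} = {}" using False len unfolding A_def fA_def by auto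
      have "v \<noteq> vs!0" using False len by auto
      thus ?thesis using sw dv unfolding e1 e2 by simp
    qed
  qed
  have tm: "two_matching V E M'"
    unfolding two_matching_def M'_def using ME AE key unfolding M'_def by blast
  have mx: "max_two_matching V E M'"
    unfolding max_two_matching_def using tm maxM cardM' by simp
  have sing: "singletons V M' = singletons V M - {vs!0}"
    unfolding singletons_def using key by auto
  have finS: "finite (singletons V M)" using finV unfolding singletons_def by simp
  have "card (singletons V M') + 1 = card (singletons V M)"
    unfolding sing using finS assms(3)
    by (metis One_nat_def Suc_pred add.right_neutral add_Suc_right card_Diff_singleton card_gt_0_iff empty_iff)
  thus ?thesis using mx unfolding Req Aeq M'_def by simp
qed

end
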